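(* For every $n\ge 2$, an allocation that is both TEF1 and Pareto-optimal need not exist, for goods or for chores, even when there are only two types of items. That is, for each $n\ge2$ there is an instance with $n$ agents, all items goods, two item types, and no TEF1 and PO allocation; and likewise for chores.
   Context: Items arrive one per round in a fixed order $o_1,\dots,o_m$. Agents $N=[n]$ have additive valuations; goods have $v_i(o)\ge0$, chores $v_i(o)\le0$. "Two types of items" means the items can be partitioned into $S_1,S_2$ such that each agent values all items in the same set equally. An allocation $\mathcal{A}=(A_1,\dots,A_n)$ partitions the items; $\mathcal{A}^t$ is its restriction to $o_1,\dots,o_t$. An allocation $(B_i)$ is EF1 if for all $i,j$ there is a good $g\in B_j$ with $v_i(B_i)\ge v_i(B_j\setminus\{g\})$ (goods), resp. a chore $c\in B_i$ with $v_i(B_i\setminus\{c\})\ge v_i(B_j)$ (chores), considered satisfied if $v_i(B_i)\ge v_i(B_j)$. $\mathcal{A}$ is TEF1 if $\mathcal{A}^t$ is EF1 for every $t$. $\mathcal{A}$ is Pareto-optimal (PO) if no allocation $\mathcal{A}'$ has $v_i(A'_i)\ge v_i(A_i)$ for all $i$ with strict inequality for some $i$. *)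

theory Defs
  imports Complex_Main
begin

text \<open>Agents are 0..<n, items are 0..<m arriving in the order 0,1,...,m-1
  (item t-1 is o_t). Valuations: v i x is agent i's value for item x.
  An allocation is a map from items to agents.\<close>

definition is_alloc :: "nat \<Rightarrow> nat \<Rightarrow> (nat \<Rightarrow> nat) \<Rightarrow> bool" where
  "is_alloc n m A \<longleftrightarrow> (\<forall>x<m. A x < n)"

definition bdl :: "nat \<Rightarrow> (nat \<Rightarrow> nat) \<Rightarrow> nat \<Rightarrow> nat set" where
  "bdl t A i = {x. x < t \<and> A x = i}"

definition val :: "(nat \<Rightarrow> nat \<Rightarrow> real) \<Rightarrow> nat \<Rightarrow> nat set \<Rightarrow> real" where
  "val v i S = (\<Sum>x\<in>S. v i x)"

definition goods_instance :: "nat \<Rightarrow> nat \<Rightarrow> (nat \<Rightarrow> nat \<Rightarrow> real) \<Rightarrow> bool" where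
  "goods_instance n m v \<longleftrightarrow> (\<forall>i<n. \<forall>x<m. v i x \<ge> 0)"

definition chores_instance :: "nat \<Rightarrow> nat \<Rightarrow> (nat \<Rightarrow> nat \<Rightarrow> real) \<Rightarrow> bool" where
  "chores_instance n m v \<longleftrightarrow> (\<forall>i<n. \<forall>x<m. v i x \<le> 0)"

definition two_types :: "nat \<Rightarrow> nat \<Rightarrow> (nat \<Rightarrow> nat \<Rightarrow> real) \<Rightarrow> bool" where
  "two_types n m v \<longleftrightarrow> (\<exists>S1 S2. S1 \<union> S2 = {..<m} \<and> S1 \<inter> S2 = {} \<and> S1 \<noteq> {} \<and> S2 \<noteq> {} \<and>
     (\<forall>i<n. (\<forall>x\<in>S1. \<forall>y\<in>S1. v i x = v i y) \<and> (\<forall>x\<in>S2. \<forall>y\<in>S2. v i x = v i y)))"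

definition EF1_goods :: "nat \<Rightarrow> (nat \<Rightarrow> nat \<Rightarrow> real) \<Rightarrow> nat \<Rightarrow> (nat \<Rightarrow> nat) \<Rightarrow> bool" where
  "EF1_goods n v t A \<longleftrightarrow> (\<forall>i<n. \<forall>j<n.
      val v i (bdl t A i) \<ge> val v i (bdl t A j) \<or>
      (\<exists>g\<in>bdl t A j. val v i (bdl t A i) \<ge> val v i (bdl t A j - {g})))"

definition EF1_chores :: "nat \<Rightarrow> (nat \<Rightarrow> nat \<Rightarrow> real) \<Rightarrow> nat \<Rightarrow> (nat \<Rightarrow> nat) \<Rightarrow> bool" where
  "EF1_chores n v t A \<longleftrightarrow> (\<forall>i<n. \<forall>j<n.
      val v i (bdl t A i) \<ge> val v i (bdl t A j) \<or>
      (\<exists>c\<in>bdl t A i. val v i (bdl t A i - {c}) \<ge> val v i (bdl t A j)))"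

definition TEF1_goods :: "nat \<Rightarrow> nat \<Rightarrow> (nat \<Rightarrow> nat \<Rightarrow> real) \<Rightarrow> (nat \<Rightarrow> nat) \<Rightarrow> bool" where
  "TEF1_goods n m v A \<longleftrightarrow> (\<forall>t\<le>m. EF1_goods n v t A)"

definition TEF1_chores :: "nat \<Rightarrow> nat \<Rightarrow> (nat \<Rightarrow> nat \<Rightarrow> real) \<Rightarrow> (nat \<Rightarrow> nat) \<Rightarrow> bool" where
  "TEF1_chores n m v A \<longleftrightarrow> (\<forall>t\<le>m. EF1_chores n v t A)"

definition pareto_optimal :: "nat \<Rightarrow> nat \<Rightarrow> (nat \<Rightarrow> nat \<Rightarrow> real) \<Rightarrow> (nat \<Rightarrow> nat) \<Rightarrow> bool" where
  "pareto_optimal n m v A \<longleftrightarrow> \<not> (\<exists>A'. is_alloc n m A' \<and>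
      (\<forall>i<n. val v i (bdl m A' i) \<ge> val v i (bdl m A i)) \<and>
      (\<exists>i<n. val v i (bdl m A' i) > val v i (bdl m A i)))"

end

theory Submission
  imports Defs
begin

lemma finite_bdl[simp]: "finite (bdl t A i)"
  unfolding bdl_def by auto

lemma val_bdl_sum: "val v i (bdl t A j) = (\<Sum>x<t. if A x = j then v i x else 0)"
proof -
  have "bdl t A j = {x \<in> {..<t}. A x = j}" unfolding bdl_def by auto
  then have "val v i (bdl t A j) = sum (v i) {x \<in> {..<t}. A x = j}" unfolding val_def by simp
  also have "... = (\<Sum>x<t. if A x = j then v i x else 0)"
    by (rule sum.inter_filter) simp
  finally show ?thesis .
qed

lemma val_upd:
  assumes "x < t"
  shows "val v i (bdl t (A(x:=a)) i) = val v i (bdl t A i)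
           - (if A x = i then v i x else 0) + (if a = i then v i x else 0)"
proof -
  have f: "finite {..<t}" by simp
  have xin: "x \<in> {..<t}" using assms by simp
  define g where "g = (\<lambda>z. if (A(x:=a)) z = i then v i z else 0)"
  have "(\<Sum>z<t. if (A(x:=a)) z = i then v i z else 0) = sum g {..<t}" unfolding g_def by simp
  also have "... = g x + sum g ({..<t}-{x})" by (rule sum.remove[OF f xin])
  also have "... = (if a = i then v i x else 0) + (\<Sum>z\<in>{..<t}-{x}. if (A(x:=a)) z = i then v i z else 0)"
    unfolding g_def by simp
  also have "(\<Sum>z\<in>{..<t}-{x}. if (A(x:=a)) z = i then v i z else 0)
      = (\<Sum>z\<in>{..<t}-{x}. if A z = i then v i z else 0)"
    by (rule sum.cong) auto
  also have "(\<Sum>z\<in>{..<t}-{x}. if A z = i then v i z else 0)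
      = (\<Sum>z<t. if A z = i then v i z else 0) - (if A x = i then v i x else 0)"
    using sum.remove[OF f xin, of "\<lambda>z. if A z = i then v i z else 0"] by simp
  finally show ?thesis unfolding val_bdl_sum by simp
qed

lemma bdl_lt: "g \<in> bdl t A j \<Longrightarrow> g < t \<and> A g = j"
  unfolding bdl_def by auto

lemma val_remove:
  assumes "g \<in> bdl t A j"
  shows "val v i (bdl t A j - {g}) = val v i (bdl t A j) - v i g"
  using assms unfolding val_def by (simp add: sum_diff1)

lemma val_sub_le:
  assumes "finite B" "T \<subseteq> B" "\<forall>x\<in>B. v i x \<le> 0"
  shows "val v i B \<le> val v i T"
proof -
  have "val v i B = val v i T + sum (v i) (B - T)"
    unfolding val_def using sum.subset_diff[OF assms(2) assms(1)] by (simp add: add.commute)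
  moreover have "sum (v i) (B - T) \<le> 0" using assms(3) by (intro sum_nonpos) auto
  ultimately show ?thesis by simp
qed

lemma val_card_le:
  assumes "finite B" "\<forall>x\<in>B. v i x \<le> -1"
  shows "val v i B \<le> - real (card B)"
proof -
  have "val v i B \<le> (\<Sum>x\<in>B. -1)" unfolding val_def using assms by (intro sum_mono) auto
  then show ?thesis by simp
qed

definition vg :: "nat \<Rightarrow> nat \<Rightarrow> real" where
  "vg i x = (if i = 0 then (if x < 2 then 2 else 1) else if i = 1 then 1 else 0)"

lemma goods_part:
  assumes n: "n \<ge> 2"
  shows "goods_instance n 5 vg \<and> two_types n 5 vg \<and>
            \<not> (\<exists>A. is_alloc n 5 A \<and> TEF1_goods n 5 vg A \<and> pareto_optimal n 5 vg A)"
proof (intro conjI notI)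
  show "goods_instance n 5 vg" unfolding goods_instance_def vg_def by auto
  show "two_types n 5 vg" unfolding two_types_def
    by (rule exI[of _ "{0,1}"], rule exI[of _ "{2,3,4}"]) (auto simp: vg_def)
  assume "\<exists>A. is_alloc n 5 A \<and> TEF1_goods n 5 vg A \<and> pareto_optimal n 5 vg A"
  then obtain A where al: "is_alloc n 5 A" and tef: "TEF1_goods n 5 vg A"
    and po: "pareto_optimal n 5 vg A" by blast
  have s2: "(\<Sum>x<2. f x) = f 0 + f 1" for f :: "nat \<Rightarrow> real"
    by (simp add: numeral_2_eq_2)
  have s5: "(\<Sum>x<5. f x) = f 0 + f 1 + f 2 + f 3 + f 4" for f :: "nat \<Rightarrow> real"
    by (simp add: eval_nat_numeral)
  have lt2: "A x < 2" if x: "x < 5" for x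
  proof (rule ccontr)
    assume "\<not> A x < 2"
    define A' where "A' = A(x:=0)"
    have "is_alloc n 5 A'" using al n unfolding is_alloc_def A'_def by auto
    moreover have "\<forall>i<n. val vg i (bdl 5 A' i) \<ge> val vg i (bdl 5 A i)"
      using \<open>\<not> A x < 2\<close> unfolding A'_def val_upd[OF x] by (auto simp: vg_def)
    moreover have "val vg 0 (bdl 5 A' 0) > val vg 0 (bdl 5 A 0)"
      using \<open>\<not> A x < 2\<close> unfolding A'_def val_upd[OF x] by (auto simp: vg_def)
    ultimately show False using po n unfolding pareto_optimal_def by force
  qed
  have ef2: "EF1_goods n vg 2 A" and ef5: "EF1_goods n vg 5 A"
    using tef unfolding TEF1_goods_def by auto
  have d01: "A 0 \<noteq> A 1"
  proof
    assume eq: "A 0 = A 1"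
    have "A 0 = 0 \<or> A 0 = 1" using lt2[of 0] by auto
    then show False
    proof
      assume a0: "A 0 = 0"
      have "val vg 1 (bdl 2 A 1) \<ge> val vg 1 (bdl 2 A 0) \<or>
        (\<exists>g\<in>bdl 2 A 0. val vg 1 (bdl 2 A 1) \<ge> val vg 1 (bdl 2 A 0 - {g}))"
        using ef2 n unfolding EF1_goods_def by auto
      then show False using a0 eq
        by (auto simp: val_remove val_bdl_sum s2 vg_def)
    next
      assume a0: "A 0 = 1"
      have "val vg 0 (bdl 2 A 0) \<ge> val vg 0 (bdl 2 A 1) \<or>
        (\<exists>g\<in>bdl 2 A 1. val vg 0 (bdl 2 A 0) \<ge> val vg 0 (bdl 2 A 1 - {g}))"
        using ef2 n unfolding EF1_goods_def by auto
      then show False using a0 eq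
        by (auto simp: val_remove val_bdl_sum s2 vg_def dest: bdl_lt)
    qed
  qed
  have l0: "A 0 < 2" and l1: "A 1 < 2" using lt2 by auto
  have "\<exists>s<2. A s = 1"
  proof (cases "A 0 = 1")
    case True then show ?thesis by (intro exI[of _ 0]) auto
  next
    case False then have "A 1 = 1" using d01 l0 l1 by linarith
    then show ?thesis by (intro exI[of _ 1]) auto
  qed
  then obtain s where s: "s < 2" "A s = 1" by blast
  have to1: "A y = 1" if y: "2 \<le> y" "y < 5" for y
  proof (rule ccontr)
    assume "A y \<noteq> 1"
    then have y0: "A y = 0" using lt2[of y] y by auto
    define A' where "A' = A(s:=0, y:=1)"
    have sy: "s \<noteq> y" using s y by auto
    have ss: "s < 5" using s by auto
    have "is_alloc n 5 A'" using al n unfolding is_alloc_def A'_def by auto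
    moreover have "\<forall>i<n. val vg i (bdl 5 A' i) \<ge> val vg i (bdl 5 A i)"
      using s y y0 sy unfolding A'_def val_upd[OF y(2)] val_upd[OF ss] by (auto simp: vg_def)
    moreover have "val vg 0 (bdl 5 A' 0) > val vg 0 (bdl 5 A 0)"
      using s y y0 sy unfolding A'_def val_upd[OF y(2)] val_upd[OF ss] by (auto simp: vg_def)
    ultimately show False using po n unfolding pareto_optimal_def by force
  qed
  have "val vg 0 (bdl 5 A 0) \<ge> val vg 0 (bdl 5 A 1) \<or>
        (\<exists>g\<in>bdl 5 A 1. val vg 0 (bdl 5 A 0) \<ge> val vg 0 (bdl 5 A 1 - {g}))"
    using ef5 n unfolding EF1_goods_def by auto
  moreover have "A 2 = 1" "A 3 = 1" "A 4 = 1" using to1 by auto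
  moreover have vb: "vg 0 g \<le> 2" for g unfolding vg_def by auto
  moreover have "vg 0 0 = 2" "vg 0 1 = 2" "vg 0 2 = 1" "vg 0 3 = 1" "vg 0 4 = 1"
    unfolding vg_def by auto
  moreover have "A 0 = 0 \<and> A 1 = 1 \<or> A 0 = 1 \<and> A 1 = 0" using d01 l0 l1 by linarith
  ultimately show False
    by (auto simp: val_remove val_bdl_sum s5 simp del: One_nat_def) (smt (verit) vb)+
qed

definition vc :: "nat \<Rightarrow> nat \<Rightarrow> nat \<Rightarrow> real" where
  "vc n i x = (if i = 0 then (if x < n then -2 else -1) else -1)"

lemma chores_part:
  assumes n: "n \<ge> 2"
  shows "chores_instance n (n+3) (vc n) \<and> two_types n (n+3) (vc n) \<and>
            \<not> (\<exists>A. is_alloc n (n+3) A \<and> TEF1_chores n (n+3) (vc n) A \<and> pareto_optimal n (n+3) (vc n) A)"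
proof (intro conjI notI)
  show "chores_instance n (n+3) (vc n)" unfolding chores_instance_def vc_def by auto
  show "two_types n (n+3) (vc n)" unfolding two_types_def
    by (rule exI[of _ "{..<n}"], rule exI[of _ "{n..<n+3}"]) (use n in \<open>auto simp: vc_def lessThan_empty_iff\<close>)
  assume "\<exists>A. is_alloc n (n+3) A \<and> TEF1_chores n (n+3) (vc n) A \<and> pareto_optimal n (n+3) (vc n) A"
  then obtain A where al: "is_alloc n (n+3) A" and tef: "TEF1_chores n (n+3) (vc n) A"
    and po: "pareto_optimal n (n+3) (vc n) A" by blast
  have efn: "EF1_chores n (vc n) n A" and eff: "EF1_chores n (vc n) (n+3) A"
    using tef unfolding TEF1_chores_def by auto
  have vneg: "vc n i x \<le> -1" for i x unfolding vc_def by auto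
  have vlow: "vc n i x \<ge> -2" for i x unfolding vc_def by auto
  have surj: "\<exists>x<n. A x = j" if j: "j < n" for j
  proof (rule ccontr)
    assume nh: "\<not> (\<exists>x<n. A x = j)"
    have "A ` {..<n} \<subseteq> {..<n} - {j}" using al nh unfolding is_alloc_def by auto
    then have "card (A ` {..<n}) \<le> card ({..<n} - {j})" by (intro card_mono) auto
    also have "... < card {..<n}" using j by simp
    finally have "\<not> inj_on A {..<n}" by (rule pigeonhole)
    then obtain x y where xy: "x < n" "y < n" "x \<noteq> y" "A x = A y" unfolding inj_on_def by auto
    define k where "k = A x"
    have k: "k < n" using al xy unfolding is_alloc_def k_def by auto
    have sub: "{x, y} \<subseteq> bdl n A k" using xy unfolding bdl_def k_def by auto
    have c2: "card (bdl n A k) \<ge> 2"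
      using card_mono[OF finite_bdl sub] xy by simp
    have e: "bdl n A j = {}" using nh unfolding bdl_def by auto
    have "val (vc n) k (bdl n A k) \<ge> val (vc n) k (bdl n A j) \<or>
      (\<exists>c\<in>bdl n A k. val (vc n) k (bdl n A k - {c}) \<ge> val (vc n) k (bdl n A j))"
      using efn k j unfolding EF1_chores_def by auto
    then show False
    proof
      assume "val (vc n) k (bdl n A k) \<ge> val (vc n) k (bdl n A j)"
      moreover have "val (vc n) k (bdl n A k) \<le> - real (card (bdl n A k))"
        using vneg by (intro val_card_le) auto
      ultimately show False using e c2 by (simp add: val_def)
    next
      assume "\<exists>c\<in>bdl n A k. val (vc n) k (bdl n A k - {c}) \<ge> val (vc n) k (bdl n A j)"
      then obtain c where c: "c \<in> bdl n A k" "val (vc n) k (bdl n A k - {c}) \<ge> val (vc n) k (bdl n A j)"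
        by blast
      moreover have "val (vc n) k (bdl n A k - {c}) \<le> - real (card (bdl n A k - {c}))"
        using vneg by (intro val_card_le) auto
      moreover have "card (bdl n A k - {c}) \<ge> 1" using c2 c(1) by simp
      ultimately show False using e by (simp add: val_def)
    qed
  qed
  have img: "A ` {..<n} = {..<n}"
    using surj al unfolding is_alloc_def by force
  have inj: "inj_on A {..<n}"
    by (rule eq_card_imp_inj_on) (auto simp: img)
  obtain y where y: "y < n" "A y = 0" using surj n by force
  have to0: "A x = 0" if x: "n \<le> x" "x < n+3" for x
  proof (rule ccontr)
    assume nz: "A x \<noteq> 0"
    define k where "k = A x"
    define A' where "A' = A(x:=0, y:=k)"
    have xy: "x \<noteq> y" using x y by auto
    have yl: "y < n+3" using y by auto
    have k: "k < n" using al x unfolding is_alloc_def k_def by auto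
    have "is_alloc n (n+3) A'" using al n k unfolding is_alloc_def A'_def by auto
    moreover have "\<forall>i<n. val (vc n) i (bdl (n+3) A' i) \<ge> val (vc n) i (bdl (n+3) A i)"
      using x y xy nz unfolding A'_def val_upd[OF x(2)] val_upd[OF yl] k_def by (auto simp: vc_def)
    moreover have "val (vc n) 0 (bdl (n+3) A' 0) > val (vc n) 0 (bdl (n+3) A 0)"
      using x y xy nz unfolding A'_def val_upd[OF x(2)] val_upd[OF yl] k_def by (auto simp: vc_def)
    ultimately show False using po n unfolding pareto_optimal_def by force
  qed
  have "1 < n" using n by simp
  then obtain z where z: "z < n" "A z = 1" using surj by blast
  have b1: "bdl (n+3) A 1 \<subseteq> {z}"
  proof
    fix w assume w: "w \<in> bdl (n+3) A 1"
    then have "w < n+3" "A w = 1" unfolding bdl_def by auto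
    then have "w < n" using to0[of w] by (cases "n \<le> w") auto
    then show "w \<in> {z}" using inj z \<open>A w = 1\<close> unfolding inj_on_def by auto
  qed
  have v1: "val (vc n) 0 (bdl (n+3) A 1) \<ge> -2"
  proof (cases "bdl (n+3) A 1 = {}")
    case True then show ?thesis by (simp add: val_def)
  next
    case False then have "bdl (n+3) A 1 = {z}" using b1 by blast
    then show ?thesis using vlow by (simp add: val_def)
  qed
  have sub0: "{y, n, n+1, n+2} \<subseteq> bdl (n+3) A 0" using y to0 unfolding bdl_def by auto
  have "val (vc n) 0 (bdl (n+3) A 0) \<le> val (vc n) 0 {y, n, n+1, n+2}"
    by (rule val_sub_le[OF finite_bdl sub0]) (auto simp: vc_def)
  also have "... = -5" using y unfolding val_def by (simp add: vc_def)
  finally have v0: "val (vc n) 0 (bdl (n+3) A 0) \<le> -5" .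
  have "val (vc n) 0 (bdl (n+3) A 0) \<ge> val (vc n) 0 (bdl (n+3) A 1) \<or>
      (\<exists>c\<in>bdl (n+3) A 0. val (vc n) 0 (bdl (n+3) A 0 - {c}) \<ge> val (vc n) 0 (bdl (n+3) A 1))"
    using eff n unfolding EF1_chores_def by auto
  then show False
  proof
    assume "val (vc n) 0 (bdl (n+3) A 0) \<ge> val (vc n) 0 (bdl (n+3) A 1)"
    then show False using v0 v1 by linarith
  next
    assume "\<exists>c\<in>bdl (n+3) A 0. val (vc n) 0 (bdl (n+3) A 0 - {c}) \<ge> val (vc n) 0 (bdl (n+3) A 1)"
    then obtain c where c: "c \<in> bdl (n+3) A 0"
      "val (vc n) 0 (bdl (n+3) A 0 - {c}) \<ge> val (vc n) 0 (bdl (n+3) A 1)" by blast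
    then show False using v0 v1 vlow[of 0 c] val_remove[OF c(1), of "vc n" 0] by linarith
  qed
qed

theorem proposition2:
  fixes n :: nat
  assumes "n \<ge> 2"
  shows "(\<exists>m v. goods_instance n m v \<and> two_types n m v \<and>
            \<not> (\<exists>A. is_alloc n m A \<and> TEF1_goods n m v A \<and> pareto_optimal n m v A))
       \<and> (\<exists>m v. chores_instance n m v \<and> two_types n m v \<and>
            \<not> (\<exists>A. is_alloc n m A \<and> TEF1_chores n m v A \<and> pareto_optimal n m v A))"
  using goods_part[OF assms] chores_part[OF assms] by blast

end
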